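(* Let $L\subseteq\Sigma^*$ be a regular language and let $M=(M(L),\le_L)$ be its syntactic ordered monoid. Then $N^1(M)=\Theta(N^1(L))$ as functions of $n$.
   Context: Non-deterministic communication complexity: for $f:X\times Y\to\{0,1\}$ (Alice holds $x\in X$, Bob holds $y\in Y$), $N^1(f)$ is the minimum cost of a non-deterministic protocol for $f$; equivalently, up to an additive constant 2, $N^1(f)=\log_2 C^1(f)$, where $C^1(f)$ is the minimum number of rectangles $S\times T\subseteq X\times Y$ on which $f\equiv 1$ whose union is $f^{-1}(1)$. A finite ordered monoid $(M,\le)$ is a finite monoid with a partial order such that $x\le y$ implies $zx\le zy$ and $xz\le yz$ for all $z\in M$. An order ideal is a subset $I\subseteq M$ such that $y\in I$ and $x\le y$ imply $x\in I$. For a finite ordered monoid $M$ and an order ideal $I$, $N^1(M,I)(n)$ is $N^1$ of the function in which Alice receives $m_1,m_3,\dots,m_{2n-1}\in M$, Bob receives $m_2,m_4,\dots,m_{2n}\in M$, and the value is $1$ iff $m_1m_2\cdots m_{2n}\in I$; $N^1(M)(n)=\max_I N^1(M,I)(n)$ over all order ideals $I$ of $M$. For a language $L\subseteq\Sigma^*$, $N^1(L)(n)$ is $N^1$ of the function in which Alice receives $a_1,a_3,\dots,a_{2n-1}$, Bob receives $a_2,a_4,\dots,a_{2n}$, each $a_i\in\Sigma\cup\{\epsilon\}$ ($\epsilon$ the empty word), and the value is $1$ iff $a_1a_2\cdots a_{2n}\in L$. Asymptotic notation refers to $n\to\infty$. Syntactic ordered monoid: for $L\subseteq\Sigma^*$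 write $x\preceq_L y$ if for all $u,v\in\Sigma^*$, $uyv\in L\Rightarrow uxv\in L$, and $x\equiv_L y$ if $x\preceq_L y$ and $y\preceq_L x$. The syntactic monoid is $M(L)=\Sigma^*/\equiv_L$, and it is ordered by $[x]\le_L[y]$ iff $x\preceq_L y$; $(M(L),\le_L)$ is the syntactic ordered monoid. *)

theory Defs
  imports Complex_Main "HOL-Library.Landau_Symbols"
begin

definition one_cover :: "'x set \<Rightarrow> 'y set \<Rightarrow> ('x \<Rightarrow> 'y \<Rightarrow> bool) \<Rightarrow> ('x set \<times> 'y set) list \<Rightarrow> bool" where
  "one_cover X Y f Rs \<longleftrightarrow>
     (\<forall>(S,T) \<in> set Rs. S \<subseteq> X \<and> T \<subseteq> Y \<and> (\<forall>x\<in>S. \<forall>y\<in>T. f x y)) \<and>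
     (\<Union>(S,T) \<in> set Rs. S \<times> T) = {(x,y). x \<in> X \<and> y \<in> Y \<and> f x y}"

definition C1 :: "'x set \<Rightarrow> 'y set \<Rightarrow> ('x \<Rightarrow> 'y \<Rightarrow> bool) \<Rightarrow> nat" where
  "C1 X Y f = (LEAST k. \<exists>Rs. length Rs = k \<and> one_cover X Y f Rs)"

text \<open>N^1(f) = log_2 C^1(f) (the convention N^1 = log_2 C^1 up to additive constant;
  the empty cover, for f identically 0, is given cost 0).\<close>
definition N1 :: "'x set \<Rightarrow> 'y set \<Rightarrow> ('x \<Rightarrow> 'y \<Rightarrow> bool) \<Rightarrow> real" where
  "N1 X Y f = (if C1 X Y f = 0 then 0 else log 2 (real (C1 X Y f)))"

definition finite_ordered_monoid ::
  "'m set \<Rightarrow> ('m \<Rightarrow> 'm \<Rightarrow> 'm) \<Rightarrow> 'm \<Rightarrow> ('m \<Rightarrow> 'm \<Rightarrow> bool) \<Rightarrow> bool" where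
  "finite_ordered_monoid M mult e le \<longleftrightarrow>
     finite M \<and> e \<in> M \<and> (\<forall>x\<in>M. \<forall>y\<in>M. mult x y \<in> M) \<and>
     (\<forall>x\<in>M. \<forall>y\<in>M. \<forall>z\<in>M. mult (mult x y) z = mult x (mult y z)) \<and>
     (\<forall>x\<in>M. mult e x = x \<and> mult x e = x) \<and>
     (\<forall>x\<in>M. le x x) \<and>
     (\<forall>x\<in>M. \<forall>y\<in>M. le x y \<and> le y x \<longrightarrow> x = y) \<and>
     (\<forall>x\<in>M. \<forall>y\<in>M. \<forall>z\<in>M. le x y \<and> le y z \<longrightarrow> le x z) \<and>
     (\<forall>x\<in>M. \<forall>y\<in>M. \<forall>z\<in>M. le x y \<longrightarrow> le (mult z x) (mult z y) \<and> le (mult x z) (mult y z))"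

definition order_ideal :: "'m set \<Rightarrow> ('m \<Rightarrow> 'm \<Rightarrow> bool) \<Rightarrow> 'm set \<Rightarrow> bool" where
  "order_ideal M le I \<longleftrightarrow> I \<subseteq> M \<and> (\<forall>y\<in>I. \<forall>x\<in>M. le x y \<longrightarrow> x \<in> I)"

definition interleave :: "'m list \<Rightarrow> 'm list \<Rightarrow> 'm list" where
  "interleave xs ys = concat (map (\<lambda>(a,b). [a,b]) (zip xs ys))"

definition mprod :: "('m \<Rightarrow> 'm \<Rightarrow> 'm) \<Rightarrow> 'm \<Rightarrow> 'm list \<Rightarrow> 'm" where
  "mprod mult e ms = foldr mult ms e"

definition inputs :: "nat \<Rightarrow> 'a set \<Rightarrow> 'a list set" where
  "inputs n A = {xs. length xs = n \<and> set xs \<subseteq> A}"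

definition N1_monoid_ideal ::
  "'m set \<Rightarrow> ('m \<Rightarrow> 'm \<Rightarrow> 'm) \<Rightarrow> 'm \<Rightarrow> 'm set \<Rightarrow> nat \<Rightarrow> real" where
  "N1_monoid_ideal M mult e I n =
     N1 (inputs n M) (inputs n M) (\<lambda>xs ys. mprod mult e (interleave xs ys) \<in> I)"

definition N1_monoid ::
  "'m set \<Rightarrow> ('m \<Rightarrow> 'm \<Rightarrow> 'm) \<Rightarrow> 'm \<Rightarrow> ('m \<Rightarrow> 'm \<Rightarrow> bool) \<Rightarrow> nat \<Rightarrow> real" where
  "N1_monoid M mult e le n =
     Max ((\<lambda>I. N1_monoid_ideal M mult e I n) ` {I. order_ideal M le I})"

text \<open>Letters are Some a, the empty word epsilon is None.\<close>
definition opt_word :: "'a option \<Rightarrow> 'a list" where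
  "opt_word a = (case a of None \<Rightarrow> [] | Some x \<Rightarrow> [x])"

definition N1_lang :: "'a set \<Rightarrow> 'a list set \<Rightarrow> nat \<Rightarrow> real" where
  "N1_lang \<Sigma> L n =
     N1 (inputs n (insert None (Some ` \<Sigma>))) (inputs n (insert None (Some ` \<Sigma>)))
        (\<lambda>xs ys. concat (map opt_word (interleave xs ys)) \<in> L)"

definition regular :: "'a set \<Rightarrow> 'a list set \<Rightarrow> bool" where
  "regular \<Sigma> L \<longleftrightarrow> (\<exists>(Q::nat set) q0 \<delta> F.
      finite Q \<and> q0 \<in> Q \<and> F \<subseteq> Q \<and> (\<forall>q\<in>Q. \<forall>a\<in>\<Sigma>. \<delta> q a \<in> Q) \<and>
      L = {w \<in> lists \<Sigma>. foldl \<delta> q0 w \<in> F})"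

definition synt_le :: "'a set \<Rightarrow> 'a list set \<Rightarrow> 'a list \<Rightarrow> 'a list \<Rightarrow> bool" where
  "synt_le \<Sigma> L x y \<longleftrightarrow> (\<forall>u\<in>lists \<Sigma>. \<forall>v\<in>lists \<Sigma>. u @ y @ v \<in> L \<longrightarrow> u @ x @ v \<in> L)"

definition synt_class :: "'a set \<Rightarrow> 'a list set \<Rightarrow> 'a list \<Rightarrow> 'a list set" where
  "synt_class \<Sigma> L x = {y \<in> lists \<Sigma>. synt_le \<Sigma> L x y \<and> synt_le \<Sigma> L y x}"

text \<open>M(L) = Sigma^*/equiv_L, elements are the equivalence classes.\<close>
definition synt_monoid :: "'a set \<Rightarrow> 'a list set \<Rightarrow> 'a list set set" where
  "synt_monoid \<Sigma> L = synt_class \<Sigma> L ` lists \<Sigma>"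

definition synt_mult :: "'a set \<Rightarrow> 'a list set \<Rightarrow> 'a list set \<Rightarrow> 'a list set \<Rightarrow> 'a list set" where
  "synt_mult \<Sigma> L A B = synt_class \<Sigma> L ((SOME x. x \<in> A) @ (SOME y. y \<in> B))"

definition synt_unit :: "'a set \<Rightarrow> 'a list set \<Rightarrow> 'a list set" where
  "synt_unit \<Sigma> L = synt_class \<Sigma> L []"

definition synt_order :: "'a set \<Rightarrow> 'a list set \<Rightarrow> 'a list set \<Rightarrow> 'a list set \<Rightarrow> bool" where
  "synt_order \<Sigma> L A B \<longleftrightarrow> synt_le \<Sigma> L (SOME x. x \<in> A) (SOME y. y \<in> B)"

end

theory Submission
  imports Defs "HOL-Library.FuncSet"
begin


lemma one_coverI:
  assumes "\<And>S T. (S,T) \<in> set Rs \<Longrightarrow> S \<subseteq> X \<and> T \<subseteq> Y \<and> (\<forall>x\<in>S. \<forall>y\<in>T. f x y)"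
    and "\<And>x y. x \<in> X \<Longrightarrow> y \<in> Y \<Longrightarrow> f x y \<Longrightarrow> \<exists>(S,T)\<in>set Rs. x \<in> S \<and> y \<in> T"
  shows "one_cover X Y f Rs"
  unfolding one_cover_def
proof (intro conjI)
  show "\<forall>(S,T)\<in>set Rs. S \<subseteq> X \<and> T \<subseteq> Y \<and> (\<forall>x\<in>S. \<forall>y\<in>T. f x y)"
    using assms(1) by blast
  show "(\<Union>(S,T)\<in>set Rs. S \<times> T) = {(x,y). x \<in> X \<and> y \<in> Y \<and> f x y}"
  proof (intro equalityI subsetI)
    fix p assume "p \<in> (\<Union>(S,T)\<in>set Rs. S \<times> T)"
    then obtain S T where "(S,T) \<in> set Rs" "p \<in> S \<times> T" by blast
    then show "p \<in> {(x,y). x \<in> X \<and> y \<in> Y \<and> f x y}" using assms(1)[of S T] by blast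
  next
    fix p assume "p \<in> {(x,y). x \<in> X \<and> y \<in> Y \<and> f x y}"
    then obtain x y where "p = (x,y)" "x \<in> X" "y \<in> Y" "f x y" by blast
    then show "p \<in> (\<Union>(S,T)\<in>set Rs. S \<times> T)" using assms(2)[of x y] by blast
  qed
qed

lemma one_coverD:
  assumes "one_cover X Y f Rs"
  shows "\<And>S T. (S,T) \<in> set Rs \<Longrightarrow> S \<subseteq> X \<and> T \<subseteq> Y \<and> (\<forall>x\<in>S. \<forall>y\<in>T. f x y)"
    and "\<And>x y. x \<in> X \<Longrightarrow> y \<in> Y \<Longrightarrow> f x y \<Longrightarrow> \<exists>(S,T)\<in>set Rs. x \<in> S \<and> y \<in> T"
proof -
  have A: "\<forall>p\<in>set Rs. case p of (S,T) \<Rightarrow> S \<subseteq> X \<and> T \<subseteq> Y \<and> (\<forall>x\<in>S. \<forall>y\<in>T. f x y)"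
    using assms unfolding one_cover_def by (rule conjunct1)
  show "\<And>S T. (S,T) \<in> set Rs \<Longrightarrow> S \<subseteq> X \<and> T \<subseteq> Y \<and> (\<forall>x\<in>S. \<forall>y\<in>T. f x y)"
    using A by (drule_tac x="(S,T)" in bspec) simp_all
  fix x y assume "x \<in> X" "y \<in> Y" "f x y"
  then have "(x,y) \<in> (\<Union>(S,T)\<in>set Rs. S \<times> T)" using assms unfolding one_cover_def by blast
  then show "\<exists>(S,T)\<in>set Rs. x \<in> S \<and> y \<in> T" by blast
qed

lemma C1_le: "one_cover X Y f Rs \<Longrightarrow> C1 X Y f \<le> length Rs"
  unfolding C1_def by (rule Least_le) auto

lemma cover_exists:
  assumes "finite X" "finite Y"
  shows "\<exists>Rs. one_cover X Y f Rs"
proof -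
  have "finite {(x,y). x \<in> X \<and> y \<in> Y \<and> f x y}"
    by (rule finite_subset[OF _ finite_cartesian_product[OF assms]]) auto
  then obtain l where l: "set l = {(x,y). x \<in> X \<and> y \<in> Y \<and> f x y}"
    using finite_list by blast
  show ?thesis
    by (rule exI[of _ "map (\<lambda>(x,y). ({x},{y})) l"], rule one_coverI) (use l in auto)
qed

lemma C1_ex:
  assumes "finite X" "finite Y"
  shows "\<exists>Rs. length Rs = C1 X Y f \<and> one_cover X Y f Rs"
proof -
  obtain R where "one_cover X Y f R" using cover_exists[OF assms] by blast
  then have "\<exists>k Rs. length Rs = k \<and> one_cover X Y f Rs" by blast
  then show ?thesis unfolding C1_def by (rule LeastI_ex)
qed

lemma C1_cong:
  assumes "\<And>x y. x \<in> X \<Longrightarrow> y \<in> Y \<Longrightarrow> f x y = g x y"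
  shows "C1 X Y f = C1 X Y g"
proof -
  have "one_cover X Y f Rs = one_cover X Y g Rs" for Rs
    unfolding one_cover_def using assms by (auto 0 3 simp: subset_iff)
  thus ?thesis unfolding C1_def by simp
qed

lemma C1_or:
  assumes "finite X" "finite Y"
  shows "C1 X Y (\<lambda>x y. f x y \<or> g x y) \<le> C1 X Y f + C1 X Y g"
proof -
  obtain R1 where R1: "length R1 = C1 X Y f" "one_cover X Y f R1" using C1_ex[OF assms] by blast
  obtain R2 where R2: "length R2 = C1 X Y g" "one_cover X Y g R2" using C1_ex[OF assms] by blast
  have "one_cover X Y (\<lambda>x y. f x y \<or> g x y) (R1 @ R2)"
  proof (rule one_coverI)
    fix S T assume "(S,T) \<in> set (R1 @ R2)"
    then show "S \<subseteq> X \<and> T \<subseteq> Y \<and> (\<forall>x\<in>S. \<forall>y\<in>T. f x y \<or> g x y)"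
      using one_coverD(1)[OF R1(2), of S T] one_coverD(1)[OF R2(2), of S T] by auto
  next
    fix x y assume "x \<in> X" "y \<in> Y" "f x y \<or> g x y"
    then show "\<exists>(S,T)\<in>set (R1 @ R2). x \<in> S \<and> y \<in> T"
      using one_coverD(2)[OF R1(2), of x y] one_coverD(2)[OF R2(2), of x y] by auto
  qed
  from C1_le[OF this] R1 R2 show ?thesis by simp
qed

lemma C1_false: "C1 X Y (\<lambda>x y. False) = 0"
proof -
  have "one_cover X Y (\<lambda>x y. False) []" by (rule one_coverI) auto
  from C1_le[OF this] show ?thesis by simp
qed

lemma C1_true: "C1 X Y (\<lambda>x y. True) \<le> 1"
proof -
  have "one_cover X Y (\<lambda>x y. True) [(X,Y)]" by (rule one_coverI) auto
  from C1_le[OF this] show ?thesis by simp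
qed

lemma C1_Ex:
  assumes "finite X" "finite Y" "finite J"
  shows "C1 X Y (\<lambda>x y. \<exists>i\<in>J. f i x y) \<le> (\<Sum>i\<in>J. C1 X Y (f i))"
  using assms(3)
proof (induction J rule: finite_induct)
  case empty then show ?case by (simp add: C1_false)
next
  case (insert a J)
  have "C1 X Y (\<lambda>x y. \<exists>i\<in>insert a J. f i x y) = C1 X Y (\<lambda>x y. f a x y \<or> (\<exists>i\<in>J. f i x y))"
    by (rule C1_cong) auto
  also have "\<dots> \<le> C1 X Y (f a) + C1 X Y (\<lambda>x y. \<exists>i\<in>J. f i x y)" by (rule C1_or[OF assms(1,2)])
  also have "\<dots> \<le> C1 X Y (f a) + (\<Sum>i\<in>J. C1 X Y (f i))" using insert by simp
  finally show ?case using insert by simp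
qed

lemma C1_and:
  assumes "finite X" "finite Y"
  shows "C1 X Y (\<lambda>x y. f x y \<and> g x y) \<le> C1 X Y f * C1 X Y g"
proof -
  obtain R1 where R1: "length R1 = C1 X Y f" "one_cover X Y f R1" using C1_ex[OF assms] by blast
  obtain R2 where R2: "length R2 = C1 X Y g" "one_cover X Y g R2" using C1_ex[OF assms] by blast
  let ?R = "concat (map (\<lambda>(S,T). map (\<lambda>(S',T'). (S \<inter> S', T \<inter> T')) R2) R1)"
  have len: "length ?R = length R1 * length R2"
    by (induction R1) (auto simp: length_concat)
  have "one_cover X Y (\<lambda>x y. f x y \<and> g x y) ?R"
  proof (rule one_coverI)
    fix S T assume "(S,T) \<in> set ?R"
    then obtain p1 where p1: "p1 \<in> set R1" "(S,T) \<in> set ((\<lambda>(S,T). map (\<lambda>(S',T'). (S \<inter> S', T \<inter> T')) R2) p1)"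
      by (auto simp only: set_concat set_map)
    obtain S1 T1 where [simp]: "p1 = (S1,T1)" by (cases p1)
    from p1 obtain p2 where p2: "p2 \<in> set R2" "(S,T) = (\<lambda>(S',T'). (S1 \<inter> S', T1 \<inter> T')) p2"
      by auto
    obtain S2 T2 where [simp]: "p2 = (S2,T2)" by (cases p2)
    have "(S1,T1) \<in> set R1" "(S2,T2) \<in> set R2" "S = S1 \<inter> S2" "T = T1 \<inter> T2"
      using p1 p2 by auto
    then show "S \<subseteq> X \<and> T \<subseteq> Y \<and> (\<forall>x\<in>S. \<forall>y\<in>T. f x y \<and> g x y)"
      using one_coverD(1)[OF R1(2), of S1 T1] one_coverD(1)[OF R2(2), of S2 T2] by blast
  next
    fix x y assume "x \<in> X" "y \<in> Y" "f x y \<and> g x y"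
    then obtain S1 T1 S2 T2 where "(S1,T1) \<in> set R1" "(S2,T2) \<in> set R2" "x \<in> S1" "y \<in> T1" "x \<in> S2" "y \<in> T2"
      using one_coverD(2)[OF R1(2), of x y] one_coverD(2)[OF R2(2), of x y] by auto
    then show "\<exists>(S,T)\<in>set ?R. x \<in> S \<and> y \<in> T" by force
  qed
  from C1_le[OF this] len R1 R2 show ?thesis by simp
qed

lemma C1_All:
  assumes "finite X" "finite Y" "finite J"
  shows "C1 X Y (\<lambda>x y. \<forall>i\<in>J. f i x y) \<le> (\<Prod>i\<in>J. C1 X Y (f i))"
  using assms(3)
proof (induction J rule: finite_induct)
  case empty then show ?case using C1_true[of X Y] by simp
next
  case (insert a J)
  have "C1 X Y (\<lambda>x y. \<forall>i\<in>insert a J. f i x y) = C1 X Y (\<lambda>x y. f a x y \<and> (\<forall>i\<in>J. f i x y))"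
    by (rule C1_cong) auto
  also have "\<dots> \<le> C1 X Y (f a) * C1 X Y (\<lambda>x y. \<forall>i\<in>J. f i x y)" by (rule C1_and[OF assms(1,2)])
  also have "\<dots> \<le> C1 X Y (f a) * (\<Prod>i\<in>J. C1 X Y (f i))" using insert by simp
  finally show ?case using insert by simp
qed

lemma C1_restrict:
  assumes "finite X'" "finite Y'" "\<And>x. x \<in> X \<Longrightarrow> \<alpha> x \<in> X'" "\<And>y. y \<in> Y \<Longrightarrow> \<beta> y \<in> Y'"
  shows "C1 X Y (\<lambda>x y. f (\<alpha> x) (\<beta> y)) \<le> C1 X' Y' f"
proof -
  obtain R where R: "length R = C1 X' Y' f" "one_cover X' Y' f R" using C1_ex[OF assms(1,2)] by blast
  let ?R = "map (\<lambda>(S,T). ({x\<in>X. \<alpha> x \<in> S}, {y\<in>Y. \<beta> y \<in> T})) R"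
  have "one_cover X Y (\<lambda>x y. f (\<alpha> x) (\<beta> y)) ?R"
  proof (rule one_coverI)
    fix S T assume "(S,T) \<in> set ?R"
    then obtain S0 T0 where "(S0,T0) \<in> set R" "S = {x\<in>X. \<alpha> x \<in> S0}" "T = {y\<in>Y. \<beta> y \<in> T0}" by auto
    then show "S \<subseteq> X \<and> T \<subseteq> Y \<and> (\<forall>x\<in>S. \<forall>y\<in>T. f (\<alpha> x) (\<beta> y))"
      using one_coverD(1)[OF R(2), of S0 T0] by auto
  next
    fix x y assume "x \<in> X" "y \<in> Y" "f (\<alpha> x) (\<beta> y)"
    then obtain S T where "(S,T) \<in> set R" "\<alpha> x \<in> S" "\<beta> y \<in> T"
      using one_coverD(2)[OF R(2), of "\<alpha> x" "\<beta> y"] assms(3,4) by auto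
    then show "\<exists>(S,T)\<in>set ?R. x \<in> S \<and> y \<in> T" using \<open>x \<in> X\<close> \<open>y \<in> Y\<close> by force
  qed
  from C1_le[OF this] R show ?thesis by simp
qed

lemma C1_le1_cross:
  assumes "finite X" "finite Y" "C1 X Y f \<le> 1"
    and "x1 \<in> X" "y1 \<in> Y" "f x1 y1" "x2 \<in> X" "y2 \<in> Y" "f x2 y2"
  shows "f x1 y2"
proof -
  obtain R where R: "length R = C1 X Y f" "one_cover X Y f R" using C1_ex[OF assms(1,2)] by blast
  obtain S T where ST: "(S,T) \<in> set R" "x1 \<in> S" "y1 \<in> T" using one_coverD(2)[OF R(2), of x1 y1] assms by auto
  obtain S' T' where ST': "(S',T') \<in> set R" "x2 \<in> S'" "y2 \<in> T'" using one_coverD(2)[OF R(2), of x2 y2] assms by auto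
  have "length R \<le> 1" using R assms by simp
  with ST ST' have "(S,T) = (S',T')"
    by (cases R) auto
  with ST ST' one_coverD(1)[OF R(2), of S T] show ?thesis by auto
qed

lemma cross_C1_le1:
  assumes "\<And>x1 y1 x2 y2. x1 \<in> X \<Longrightarrow> y1 \<in> Y \<Longrightarrow> f x1 y1 \<Longrightarrow> x2 \<in> X \<Longrightarrow> y2 \<in> Y \<Longrightarrow> f x2 y2 \<Longrightarrow> f x1 y2"
  shows "C1 X Y f \<le> 1"
proof -
  let ?S = "{x\<in>X. \<exists>y\<in>Y. f x y}" and ?T = "{y\<in>Y. \<exists>x\<in>X. f x y}"
  have "one_cover X Y f [(?S,?T)]"
  proof (rule one_coverI)
    fix S T assume "(S,T) \<in> set [(?S,?T)]"
    then have "S = ?S" "T = ?T" by auto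
    then show "S \<subseteq> X \<and> T \<subseteq> Y \<and> (\<forall>x\<in>S. \<forall>y\<in>T. f x y)"
      using assms by blast
  next
    fix x y assume "x \<in> X" "y \<in> Y" "f x y"
    then show "\<exists>(S,T)\<in>set [(?S,?T)]. x \<in> S \<and> y \<in> T" by auto
  qed
  from C1_le[OF this] show ?thesis by simp
qed

lemma N1_le:
  assumes "finite X" "finite Y" "real (C1 X Y f) \<le> c" "c \<ge> 1"
  shows "N1 X Y f \<le> log 2 c"
  using assms unfolding N1_def by auto

lemma N1_eq: "N1 X Y f = log 2 (max 1 (real (C1 X Y f)))"
  unfolding N1_def by (cases "C1 X Y f") auto

lemma N1_mono: "C1 X Y f \<le> C1 X' Y' g \<Longrightarrow> N1 X Y f \<le> N1 X' Y' g"
  unfolding N1_eq by simp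


locale synt =
  fixes \<Sigma> :: "'a set" and L :: "'a list set"
  assumes Lsub: "L \<subseteq> lists \<Sigma>"
begin

abbreviation "le \<equiv> synt_le \<Sigma> L"
abbreviation "cls \<equiv> synt_class \<Sigma> L"
abbreviation "M \<equiv> synt_monoid \<Sigma> L"
abbreviation "mult \<equiv> synt_mult \<Sigma> L"
abbreviation "e \<equiv> synt_unit \<Sigma> L"
abbreviation "ord \<equiv> synt_order \<Sigma> L"

lemma le_refl: "le x x" unfolding synt_le_def by blast
lemma le_trans: "le x y \<Longrightarrow> le y z \<Longrightarrow> le x z" unfolding synt_le_def by blast

lemma le_cong:
  assumes "le x y" "a \<in> lists \<Sigma>" "b \<in> lists \<Sigma>"
  shows "le (a @ x @ b) (a @ y @ b)"
  unfolding synt_le_def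
proof (intro ballI impI)
  fix u v assume uv: "u \<in> lists \<Sigma>" "v \<in> lists \<Sigma>" "u @ (a @ y @ b) @ v \<in> L"
  have "(u @ a) @ y @ (b @ v) \<in> L" using uv by simp
  moreover have "u @ a \<in> lists \<Sigma>" "b @ v \<in> lists \<Sigma>" using uv assms by auto
  ultimately have "(u @ a) @ x @ (b @ v) \<in> L" using assms(1) unfolding synt_le_def by blast
  then show "u @ (a @ x @ b) @ v \<in> L" by simp
qed


lemma le_app:
  assumes "le x y" "le x' y'" "x \<in> lists \<Sigma>" "y' \<in> lists \<Sigma>"
  shows "le (x @ x') (y @ y')"
proof -
  have "le (x @ x' @ []) (x @ y' @ [])" by (rule le_cong) (use assms in auto)
  moreover have "le ([] @ x @ y') ([] @ y @ y')" by (rule le_cong) (use assms in auto)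
  ultimately show ?thesis by (auto intro: le_trans)
qed

lemma L_sat: "y \<in> L \<Longrightarrow> le x y \<Longrightarrow> x \<in> lists \<Sigma> \<Longrightarrow> x \<in> L"
  unfolding synt_le_def by (metis append.left_neutral append.right_neutral lists.Nil)

lemma in_cls: "x \<in> lists \<Sigma> \<Longrightarrow> x \<in> cls x"
  unfolding synt_class_def using le_refl by blast

lemma cls_eq_iff:
  assumes "x \<in> lists \<Sigma>" "y \<in> lists \<Sigma>"
  shows "cls x = cls y \<longleftrightarrow> le x y \<and> le y x"
proof
  assume "cls x = cls y"
  then have "y \<in> cls x" using in_cls[OF assms(2)] by simp
  then show "le x y \<and> le y x" unfolding synt_class_def by auto
next
  assume "le x y \<and> le y x"
  then show "cls x = cls y" unfolding synt_class_def by (auto intro: le_trans)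
qed

lemma mem_cls: "z \<in> cls x \<Longrightarrow> x \<in> lists \<Sigma> \<Longrightarrow> cls z = cls x"
  using cls_eq_iff unfolding synt_class_def by auto

lemma some_cls: "x \<in> lists \<Sigma> \<Longrightarrow> (SOME z. z \<in> cls x) \<in> cls x"
  using in_cls by (meson someI)

lemma cls_sub: "cls x \<subseteq> lists \<Sigma>" unfolding synt_class_def by auto

lemma mult_cls:
  assumes "a \<in> lists \<Sigma>" "b \<in> lists \<Sigma>"
  shows "mult (cls a) (cls b) = cls (a @ b)"
proof -
  let ?x = "SOME z. z \<in> cls a" and ?y = "SOME z. z \<in> cls b"
  have x: "?x \<in> cls a" "?x \<in> lists \<Sigma>" using some_cls[OF assms(1)] cls_sub by auto
  have y: "?y \<in> cls b" "?y \<in> lists \<Sigma>" using some_cls[OF assms(2)] cls_sub by auto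
  have ea: "le ?x a" "le a ?x" using x unfolding synt_class_def by auto
  have eb: "le ?y b" "le b ?y" using y unfolding synt_class_def by auto
  have "le (?x @ ?y) (a @ b)" by (rule le_app) (use ea eb x y assms in auto)
  moreover have "le (a @ b) (?x @ ?y)" by (rule le_app) (use ea eb x y assms in auto)
  ultimately show ?thesis unfolding synt_mult_def using cls_eq_iff x y assms by auto
qed

lemma ord_cls:
  assumes "a \<in> lists \<Sigma>" "b \<in> lists \<Sigma>"
  shows "ord (cls a) (cls b) \<longleftrightarrow> le a b"
proof -
  let ?x = "SOME z. z \<in> cls a" and ?y = "SOME z. z \<in> cls b"
  have x: "?x \<in> cls a" using some_cls[OF assms(1)] by auto
  have y: "?y \<in> cls b" using some_cls[OF assms(2)] by auto
  have ea: "le ?x a" "le a ?x" using x unfolding synt_class_def by auto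
  have eb: "le ?y b" "le b ?y" using y unfolding synt_class_def by auto
  show ?thesis unfolding synt_order_def using ea eb by (meson le_trans)
qed

lemma cls_in_M: "a \<in> lists \<Sigma> \<Longrightarrow> cls a \<in> M"
  unfolding synt_monoid_def by auto

lemma M_cases: "m \<in> M \<Longrightarrow> (\<And>a. a \<in> lists \<Sigma> \<Longrightarrow> m = cls a \<Longrightarrow> P) \<Longrightarrow> P"
  unfolding synt_monoid_def by auto

lemma concat_lists: "set Ws \<subseteq> lists A \<Longrightarrow> concat Ws \<in> lists A"
  by (induction Ws) auto

lemma mprod_cls:
  assumes "set Ws \<subseteq> lists \<Sigma>"
  shows "mprod mult e (map cls Ws) = cls (concat Ws)"
  using assms
proof (induction Ws)
  case Nil then show ?case by (simp add: mprod_def synt_unit_def)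
next
  case (Cons w Ws)
  then have "mprod mult e (map cls (w # Ws)) = mult (cls w) (cls (concat Ws))"
    by (simp add: mprod_def)
  also have "\<dots> = cls (w @ concat Ws)" using Cons concat_lists[of Ws "\<Sigma>"] by (intro mult_cls) auto
  finally show ?case by simp
qed

lemma le_concat:
  assumes "list_all2 le Ws Vs" "set Ws \<subseteq> lists \<Sigma>" "set Vs \<subseteq> lists \<Sigma>"
  shows "le (concat Ws) (concat Vs)"
  using assms
proof (induction Ws Vs rule: list_all2_induct)
  case Nil then show ?case by (simp add: le_refl)
next
  case (Cons x xs y ys)
  then have "le (x @ concat xs) (y @ concat ys)"
    using concat_lists[of ys "\<Sigma>"] by (intro le_app) auto
  then show ?case by simp
qed

end


context synt begin

lemma foldl_Q:
  assumes "\<forall>q\<in>Q. \<forall>a\<in>\<Sigma>. \<delta> q a \<in> Q"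
  shows "q \<in> Q \<Longrightarrow> w \<in> lists \<Sigma> \<Longrightarrow> foldl \<delta> q w \<in> Q"
  by (induction w arbitrary: q) (use assms in auto)

lemma finite_M:
  assumes "regular \<Sigma> L"
  shows "finite M"
proof -
  obtain Q :: "nat set" and q0 \<delta> F where Q: "finite Q" "q0 \<in> Q" "F \<subseteq> Q" "\<forall>q\<in>Q. \<forall>a\<in>\<Sigma>. \<delta> q a \<in> Q"
    and LL: "L = {w \<in> lists \<Sigma>. foldl \<delta> q0 w \<in> F}"
    using assms unfolding regular_def by blast
  define tr :: "'a list \<Rightarrow> nat \<Rightarrow> nat" where "tr w = restrict (\<lambda>q. foldl \<delta> q w) Q" for w
  have key: "le x y" if "x \<in> lists \<Sigma>" "y \<in> lists \<Sigma>" "tr x = tr y" for x y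
    unfolding synt_le_def
  proof (intro ballI impI)
    fix u v assume uv: "u \<in> lists \<Sigma>" "v \<in> lists \<Sigma>" "u @ y @ v \<in> L"
    have q: "foldl \<delta> q0 u \<in> Q" using foldl_Q[OF Q(4) Q(2) uv(1)] .
    have "foldl \<delta> (foldl \<delta> q0 u) x = foldl \<delta> (foldl \<delta> q0 u) y"
    proof -
      have "tr x (foldl \<delta> q0 u) = tr y (foldl \<delta> q0 u)" using that(3) by simp
      then show ?thesis using q unfolding tr_def restrict_def by (simp split: if_splits)
    qed
    then show "u @ x @ v \<in> L" using uv that unfolding LL by simp
  qed
  define g where "g t = cls (SOME w. w \<in> lists \<Sigma> \<and> tr w = t)" for t
  have "M \<subseteq> g ` (tr ` lists \<Sigma>)"
  proof
    fix m assume "m \<in> M"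
    then obtain a where a: "a \<in> lists \<Sigma>" "m = cls a" by (rule M_cases)
    let ?w = "SOME w. w \<in> lists \<Sigma> \<and> tr w = tr a"
    have "\<exists>w. w \<in> lists \<Sigma> \<and> tr w = tr a" using a by blast
    then have w: "?w \<in> lists \<Sigma> \<and> tr ?w = tr a" by (rule someI_ex)
    then have "cls ?w = cls a" using key a by (simp add: cls_eq_iff)
    then show "m \<in> g ` (tr ` lists \<Sigma>)" using a unfolding g_def by auto
  qed
  moreover have "tr ` lists \<Sigma> \<subseteq> Q \<rightarrow>\<^sub>E Q"
    using foldl_Q[OF Q(4)] unfolding tr_def by (auto simp: in_lists_conv_set)
  then have "finite (tr ` lists \<Sigma>)" by (rule finite_subset) (intro finite_PiE Q(1))
  ultimately show ?thesis using finite_subset finite_imageI by blast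
qed

end


definition ow :: "'a option list \<Rightarrow> 'a option list \<Rightarrow> 'a list" where
  "ow xs ys = concat (map opt_word (interleave xs ys))"

lemma interleave_Nil[simp]: "interleave [] ys = []" "interleave xs [] = []"
  unfolding interleave_def by auto

lemma interleave_Cons[simp]: "interleave (x#xs) (y#ys) = x # y # interleave xs ys"
  unfolding interleave_def by simp

lemma interleave_append:
  "length xs1 = length ys1 \<Longrightarrow> interleave (xs1 @ xs2) (ys1 @ ys2) = interleave xs1 ys1 @ interleave xs2 ys2"
  unfolding interleave_def by simp

lemma set_interleave: "length xs = length ys \<Longrightarrow> set (interleave xs ys) = set xs \<union> set ys"
proof (induction xs arbitrary: ys)
  case Nil then show ?case by simp
next
  case (Cons x xs) then show ?case by (cases ys) auto
qed

lemma map_interleave: "interleave (map f xs) (map f ys) = map f (interleave xs ys)"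
proof (induction xs arbitrary: ys)
  case Nil then show ?case by simp
next
  case (Cons x xs) then show ?case by (cases ys) auto
qed

lemma ow_Cons[simp]: "ow (x#xs) (y#ys) = opt_word x @ opt_word y @ ow xs ys"
  unfolding ow_def by simp

lemma ow_append:
  "length xs1 = length ys1 \<Longrightarrow> ow (xs1 @ xs2) (ys1 @ ys2) = ow xs1 ys1 @ ow xs2 ys2"
  unfolding ow_def by (simp add: interleave_append)

lemma ow_Some_None: "ow (map Some w) (replicate (length w) None) = w"
  by (induction w) (auto simp: ow_def opt_word_def)

lemma ow_None_Some: "ow (replicate (length w) None) (map Some w) = w"
  by (induction w) (auto simp: ow_def opt_word_def)

lemma ow_None_None: "ow (replicate k None) (replicate k None) = []"
  by (induction k) (auto simp: ow_def opt_word_def)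

lemma ow_map: "ow xs ys = concat (map opt_word (interleave xs ys))"
  by (simp add: ow_def)

definition ch :: "nat \<Rightarrow> nat \<Rightarrow> 'm list \<Rightarrow> 'm list" where
  "ch s j xs = take s (drop (j*s) xs)"

lemma length_ch: "length (ch s j xs) \<le> s"
  unfolding ch_def by simp

lemma length_ch_eq: "length xs = length ys \<Longrightarrow> length (ch s j xs) = length (ch s j ys)"
  unfolding ch_def by simp

lemma set_ch: "set (ch s j xs) \<subseteq> set xs"
  unfolding ch_def by (meson in_set_dropD in_set_takeD subsetI)

lemma interleave_chunks_take:
  assumes "length xs = length ys"
  shows "interleave (take (b*s) xs) (take (b*s) ys) = concat (map (\<lambda>j. interleave (ch s j xs) (ch s j ys)) [0..<b])"
proof (induction b)
  case 0 then show ?case by simp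
next
  case (Suc b)
  have "take (Suc b * s) xs = take (b*s) xs @ ch s b xs"
    unfolding ch_def mult_Suc add.commute[of s] by (rule take_add)
  moreover have "take (Suc b * s) ys = take (b*s) ys @ ch s b ys"
    unfolding ch_def mult_Suc add.commute[of s] by (rule take_add)
  ultimately have "interleave (take (Suc b * s) xs) (take (Suc b * s) ys)
     = interleave (take (b*s) xs) (take (b*s) ys) @ interleave (ch s b xs) (ch s b ys)"
    using assms by (simp add: interleave_append)
  then show ?case using Suc by simp
qed

lemma interleave_chunks:
  assumes "length xs = length ys" "length xs \<le> b*s"
  shows "interleave xs ys = concat (map (\<lambda>j. interleave (ch s j xs) (ch s j ys)) [0..<b])"
  using interleave_chunks_take[OF assms(1), of b s] assms by simp


locale synt_fin = synt +
  assumes finS: "finite \<Sigma>" and finM: "finite M"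
begin

definition r :: "'a list set \<Rightarrow> 'a list" where
  "r m = (SOME w. w \<in> lists \<Sigma> \<and> cls w = m)"

lemma r_props: assumes "m \<in> M" shows "r m \<in> lists \<Sigma>" "cls (r m) = m"
proof -
  obtain a where "a \<in> lists \<Sigma>" "m = cls a" using assms by (rule M_cases)
  then have "\<exists>w. w \<in> lists \<Sigma> \<and> cls w = m" by blast
  then have "r m \<in> lists \<Sigma> \<and> cls (r m) = m" unfolding r_def by (rule someI_ex)
  then show "r m \<in> lists \<Sigma>" "cls (r m) = m" by auto
qed

definition K :: nat where "K = max 1 (Max (length ` r ` M))"

lemma K_pos: "K \<ge> 1" unfolding K_def by simp

lemma len_r: "m \<in> M \<Longrightarrow> length (r m) \<le> K"
proof -
  assume m: "m \<in> M"
  have "length (r m) \<le> Max (length ` r ` M)" using finM m by (intro Max_ge) auto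
  then show ?thesis unfolding K_def by linarith
qed

lemma mprod_r:
  assumes "set ms \<subseteq> M"
  shows "mprod mult e ms = cls (concat (map r ms))"
proof -
  have "map cls (map r ms) = ms" using assms r_props(2) by (induction ms) auto
  moreover have "set (map r ms) \<subseteq> lists \<Sigma>" using assms r_props(1) by auto
  ultimately show ?thesis using mprod_cls[of "map r ms"] by simp
qed

definition Ctx :: "'a list set \<Rightarrow> ('a list \<times> 'a list) set" where
  "Ctx m = (\<lambda>(a,b). (r a, r b)) ` {(a,b) \<in> M \<times> M. r a @ r m @ r b \<in> L}"

lemma finite_sub: "finite {(a,b) \<in> M \<times> M. P a b}"
  by (rule finite_subset[of _ "M \<times> M"]) (use finM in auto)

lemma finite_Ctx: "finite (Ctx m)" unfolding Ctx_def using finite_sub by (intro finite_imageI) auto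

lemma card_Ctx: "card (Ctx m) \<le> card M * card M"
proof -
  have "card (Ctx m) \<le> card {(a,b) \<in> M \<times> M. r a @ r m @ r b \<in> L}"
    unfolding Ctx_def by (rule card_image_le) (use finite_sub in auto)
  also have "\<dots> \<le> card (M \<times> M)" by (rule card_mono) (use finM in auto)
  finally show ?thesis by (simp add: card_cartesian_product)
qed

lemma Ctx_props: "(u,v) \<in> Ctx m \<Longrightarrow> u \<in> lists \<Sigma> \<and> v \<in> lists \<Sigma> \<and> length u \<le> K \<and> length v \<le> K"
  unfolding Ctx_def using r_props len_r by auto

lemma equiv_r: "u \<in> lists \<Sigma> \<Longrightarrow> le (r (cls u)) u \<and> le u (r (cls u))"
  using r_props[OF cls_in_M] cls_eq_iff by metis

lemma ctx_lemma:
  assumes "m \<in> M" "x \<in> lists \<Sigma>"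
  shows "ord (cls x) m \<longleftrightarrow> (\<forall>(u,v)\<in>Ctx m. u @ x @ v \<in> L)"
proof -
  have rm: "r m \<in> lists \<Sigma>" "cls (r m) = m" using r_props[OF assms(1)] by auto
  have "ord (cls x) m \<longleftrightarrow> le x (r m)" using ord_cls[OF assms(2) rm(1)] rm(2) by simp
  also have "\<dots> \<longleftrightarrow> (\<forall>(u,v)\<in>Ctx m. u @ x @ v \<in> L)"
  proof
    assume le: "le x (r m)"
    show "\<forall>(u,v)\<in>Ctx m. u @ x @ v \<in> L"
    proof (clarify)
      fix u v assume "(u,v) \<in> Ctx m"
      then obtain a b where "a \<in> M" "b \<in> M" "r a @ r m @ r b \<in> L" "u = r a" "v = r b"
        unfolding Ctx_def by auto
      then show "u @ x @ v \<in> L" using le r_props unfolding synt_le_def by blast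
    qed
  next
    assume H: "\<forall>(u,v)\<in>Ctx m. u @ x @ v \<in> L"
    show "le x (r m)" unfolding synt_le_def
    proof (intro ballI impI)
      fix u v assume uv: "u \<in> lists \<Sigma>" "v \<in> lists \<Sigma>" "u @ r m @ v \<in> L"
      let ?a = "cls u" and ?b = "cls v"
      have a: "?a \<in> M" "r ?a \<in> lists \<Sigma>" "le (r ?a) u" "le u (r ?a)"
        using cls_in_M uv r_props equiv_r by auto
      have b: "?b \<in> M" "r ?b \<in> lists \<Sigma>" "le (r ?b) v" "le v (r ?b)"
        using cls_in_M uv r_props equiv_r by auto
      have "le (r ?a @ r m @ r ?b) (u @ r m @ v)"
        using a b rm uv by (intro le_app le_refl) auto
      then have "r ?a @ r m @ r ?b \<in> L" using uv(3) L_sat a b rm by auto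
      then have "(r ?a, r ?b) \<in> Ctx m" unfolding Ctx_def using a b by auto
      then have "r ?a @ x @ r ?b \<in> L" using H by auto
      moreover have "le (u @ x @ v) (r ?a @ x @ r ?b)"
        using a b assms uv by (intro le_app le_refl) auto
      ultimately show "u @ x @ v \<in> L" using L_sat uv assms by auto
    qed
  qed
  finally show ?thesis .
qed

end


context synt_fin begin

definition blockA where "blockA a = map Some (r a) @ replicate (K - length (r a)) None @ replicate K None"
definition blockB where "blockB b = replicate K None @ map Some (r b) @ replicate (K - length (r b)) None"
definition encA where "encA xs = concat (map blockA xs)"
definition encB where "encB ys = concat (map blockB ys)"

lemma len_blockA: "a \<in> M \<Longrightarrow> length (blockA a) = 2*K"
  using len_r[of a] unfolding blockA_def by simp
lemma len_blockB: "a \<in> M \<Longrightarrow> length (blockB a) = 2*K"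
  using len_r[of a] unfolding blockB_def by simp

lemma len_encA: "set xs \<subseteq> M \<Longrightarrow> length (encA xs) = 2*K*length xs"
  unfolding encA_def by (induction xs) (auto simp: len_blockA)
lemma len_encB: "set xs \<subseteq> M \<Longrightarrow> length (encB xs) = 2*K*length xs"
  unfolding encB_def by (induction xs) (auto simp: len_blockB)

lemma ow_pad: "ow (map Some w @ replicate k None) (replicate (length w + k) None) = w"
proof -
  have "ow (map Some w @ replicate k None) (replicate (length w) None @ replicate k None) = w"
    by (subst ow_append) (simp_all add: ow_Some_None ow_None_None)
  then show ?thesis by (simp add: replicate_add)
qed

lemma ow_pad2: "ow (replicate (length w + k) None) (map Some w @ replicate k None) = w"
proof -
  have "ow (replicate (length w) None @ replicate k None) (map Some w @ replicate k None) = w"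
    by (subst ow_append) (simp_all add: ow_None_Some ow_None_None)
  then show ?thesis by (simp add: replicate_add)
qed

lemma ow_block:
  assumes "a \<in> M" "b \<in> M"
  shows "ow (blockA a) (blockB b) = r a @ r b"
proof -
  have ka: "K = length (r a) + (K - length (r a))" using len_r[OF assms(1)] by simp
  have kb: "K = length (r b) + (K - length (r b))" using len_r[OF assms(2)] by simp
  have "ow (blockA a) (blockB b) =
      ow (map Some (r a) @ replicate (K - length (r a)) None) (replicate K None)
      @ ow (replicate K None) (map Some (r b) @ replicate (K - length (r b)) None)"
    unfolding blockA_def blockB_def
    by (subst append_assoc[symmetric], subst ow_append) (use len_r[OF assms(1)] in auto)
  also have "ow (map Some (r a) @ replicate (K - length (r a)) None) (replicate K None) = r a"
    by (subst ka) (rule ow_pad)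
  also have "ow (replicate K None) (map Some (r b) @ replicate (K - length (r b)) None) = r b"
    by (subst kb) (rule ow_pad2)
  finally show ?thesis .
qed

lemma ow_enc:
  assumes "length xs = length ys" "set xs \<subseteq> M" "set ys \<subseteq> M"
  shows "ow (encA xs) (encB ys) = concat (map r (interleave xs ys))"
  using assms
proof (induction xs arbitrary: ys)
  case Nil then show ?case by (simp add: encA_def encB_def ow_def)
next
  case (Cons x xs)
  then obtain y ys' where ys: "ys = y # ys'" by (cases ys) auto
  have "ow (encA (x#xs)) (encB ys) = ow (blockA x @ encA xs) (blockB y @ encB ys')"
    unfolding encA_def encB_def ys by simp
  also have "\<dots> = ow (blockA x) (blockB y) @ ow (encA xs) (encB ys')"
    using Cons.prems ys by (intro ow_append) (simp add: len_blockA len_blockB)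
  also have "ow (blockA x) (blockB y) = r x @ r y"
    using Cons.prems ys by (intro ow_block) auto
  also have "ow (encA xs) (encB ys') = concat (map r (interleave xs ys'))"
    using Cons.prems ys by (intro Cons.IH) auto
  finally show ?case using ys by simp
qed

definition aA where
  "aA n s j u v xs = map Some u @ encA (ch s j xs) @ map Some v @
     replicate (n - (length u + 2*K*length (ch s j xs) + length v)) None"
definition aB where
  "aB n s j u v ys = replicate (length u) None @ encB (ch s j ys) @ replicate (length v) None @
     replicate (n - (length u + 2*K*length (ch s j ys) + length v)) None"

lemma ow_alpha:
  assumes "length xs = length ys" "set xs \<subseteq> M" "set ys \<subseteq> M"
  shows "ow (aA n s j u v xs) (aB n s j u v ys) = u @ concat (map r (interleave (ch s j xs) (ch s j ys))) @ v"
proof -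
  have cx: "set (ch s j xs) \<subseteq> M" "set (ch s j ys) \<subseteq> M"
    using set_ch[of s j xs] set_ch[of s j ys] assms(2,3) by auto
  have cl: "length (ch s j xs) = length (ch s j ys)" using length_ch_eq[OF assms(1)] .
  have le: "length (encA (ch s j xs)) = length (encB (ch s j ys))"
    using cx cl by (simp add: len_encA len_encB)
  let ?p = "replicate (n - (length u + 2*K*length (ch s j xs) + length v)) None"
  have p: "replicate (n - (length u + 2*K*length (ch s j ys) + length v)) None = ?p" using cl by simp
  have "ow (aA n s j u v xs) (aB n s j u v ys) =
     ow (map Some u) (replicate (length u) None) @ ow (encA (ch s j xs)) (encB (ch s j ys))
     @ ow (map Some v) (replicate (length v) None) @ ow ?p ?p"
    unfolding aA_def aB_def p
    by (simp only: ow_append length_map length_replicate le)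
  also have "\<dots> = u @ concat (map r (interleave (ch s j xs) (ch s j ys))) @ v"
    by (simp only: ow_Some_None ow_None_None ow_enc[OF cl cx] append_Nil2)
  finally show ?thesis .
qed

lemma alpha_in:
  assumes "set xs \<subseteq> M" "u \<in> lists \<Sigma>" "v \<in> lists \<Sigma>" "length u + 2*K*s + length v \<le> n"
  shows "aA n s j u v xs \<in> inputs n (insert None (Some ` \<Sigma>))"
    "aB n s j u v xs \<in> inputs n (insert None (Some ` \<Sigma>))"
proof -
  have cx: "set (ch s j xs) \<subseteq> M" using set_ch[of s j xs] assms(1) by auto
  have cl: "2*K*length (ch s j xs) \<le> 2*K*s" using length_ch[of s j xs] by simp
  have tot: "length u + 2*K*length (ch s j xs) + length v \<le> n" using cl assms(4) by linarith
  have bA: "set (blockA b) \<subseteq> insert None (Some ` \<Sigma>)" if "b \<in> M" for b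
    using r_props(1)[OF that] unfolding blockA_def by (auto simp: in_lists_conv_set)
  have bB: "set (blockB b) \<subseteq> insert None (Some ` \<Sigma>)" if "b \<in> M" for b
    using r_props(1)[OF that] unfolding blockB_def by (auto simp: in_lists_conv_set)
  have sA: "set (encA (ch s j xs)) \<subseteq> insert None (Some ` \<Sigma>)"
    unfolding encA_def using cx bA by fastforce
  have sB: "set (encB (ch s j xs)) \<subseteq> insert None (Some ` \<Sigma>)"
    unfolding encB_def using cx bB by fastforce
  show "aA n s j u v xs \<in> inputs n (insert None (Some ` \<Sigma>))"
    unfolding inputs_def aA_def using sA cx tot assms(2-3)
    by (auto simp: len_encA in_lists_conv_set)
  show "aB n s j u v xs \<in> inputs n (insert None (Some ` \<Sigma>))"
    unfolding inputs_def aB_def using sB cx tot assms(2-3)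
    by (auto simp: len_encB in_lists_conv_set)
qed

end


lemma finite_inputs: "finite A \<Longrightarrow> finite (inputs n A)"
proof -
  assume "finite A"
  then have "finite {xs. set xs \<subseteq> A \<and> length xs = n}" by (rule finite_lists_length_eq)
  moreover have "inputs n A = {xs. set xs \<subseteq> A \<and> length xs = n}" unfolding inputs_def by auto
  ultimately show ?thesis by simp
qed

lemma concat_map_concat: "concat (map f (concat Zs)) = concat (map (\<lambda>Z. concat (map f Z)) Zs)"
  by (induction Zs) auto

context synt_fin begin

abbreviation "XL n \<equiv> inputs n (insert None (Some ` \<Sigma>))"
abbreviation "fL \<equiv> (\<lambda>xs ys. ow xs ys \<in> L)"
abbreviation "XM n \<equiv> inputs n M"

definition W where "W s j x y = concat (map r (interleave (ch s j x) (ch s j y)))"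

lemma set_interleave_sub: "set (interleave xs ys) \<subseteq> set xs \<union> set ys"
proof (induction xs arbitrary: ys)
  case Nil then show ?case by simp
next
  case (Cons x xs) then show ?case by (cases ys) auto
qed

lemma W_lists:
  assumes "set x \<subseteq> M" "set y \<subseteq> M"
  shows "W s j x y \<in> lists \<Sigma>"
proof -
  have "set (interleave (ch s j x) (ch s j y)) \<subseteq> M"
    using set_interleave_sub[of "ch s j x" "ch s j y"] set_ch[of s j x] set_ch[of s j y] assms by blast
  then have "set (map r (interleave (ch s j x) (ch s j y))) \<subseteq> lists \<Sigma>" using r_props(1) by auto
  then show ?thesis unfolding W_def by (rule concat_lists)
qed

lemma mprod_W:
  assumes "set x \<subseteq> M" "set y \<subseteq> M" "length x = length y" "length x \<le> b*s"
  shows "mprod mult e (interleave x y) = cls (concat (map (\<lambda>j. W s j x y) [0..<b]))"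
proof -
  have "set (interleave x y) \<subseteq> M" using set_interleave_sub[of x y] assms by blast
  then have "mprod mult e (interleave x y) = cls (concat (map r (interleave x y)))" by (rule mprod_r)
  also have "concat (map r (interleave x y)) = concat (map (\<lambda>j. W s j x y) [0..<b])"
    unfolding interleave_chunks[OF assms(3,4)] concat_map_concat W_def by (simp add: comp_def)
  finally show ?thesis .
qed

definition Good where "Good b I = {ms \<in> inputs b M. mprod mult e ms \<in> I}"
definition P where "P b ms = Sigma {..<b} (\<lambda>j. Ctx (ms!j))"
definition G where "G n s p x y = fL (aA n s (fst p) (fst (snd p)) (snd (snd p)) x) (aB n s (fst p) (fst (snd p)) (snd (snd p)) y)"

lemma key_equiv:
  assumes I: "order_ideal M ord I" and x: "x \<in> XM n" and y: "y \<in> XM n" and bs: "n \<le> b*s"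
  shows "(mprod mult e (interleave x y) \<in> I) \<longleftrightarrow> (\<exists>ms\<in>Good b I. \<forall>p\<in>P b ms. G n s p x y)"
proof -
  have xs: "set x \<subseteq> M" "length x = n" and ys: "set y \<subseteq> M" "length y = n"
    using x y unfolding inputs_def by auto
  have Wl: "\<And>j. W s j x y \<in> lists \<Sigma>" using W_lists xs ys by blast
  have G: "G n s (j,u,v) x y \<longleftrightarrow> u @ W s j x y @ v \<in> L" for j u v
    unfolding G_def W_def using ow_alpha[of x y n s j u v] xs ys by simp
  have mp: "mprod mult e (interleave x y) = cls (concat (map (\<lambda>j. W s j x y) [0..<b]))"
    using mprod_W[of x y b s] xs ys bs by simp
  have Wall: "set (map (\<lambda>j. W s j x y) [0..<b]) \<subseteq> lists \<Sigma>" using Wl by auto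
  show ?thesis
  proof
    assume H: "mprod mult e (interleave x y) \<in> I"
    let ?ms = "map (\<lambda>j. cls (W s j x y)) [0..<b]"
    have msM: "set ?ms \<subseteq> M" using Wl cls_in_M by auto
    have "mprod mult e ?ms = cls (concat (map (\<lambda>j. W s j x y) [0..<b]))"
      using mprod_cls[OF Wall] by (simp add: comp_def)
    then have "?ms \<in> Good b I" using H mp msM unfolding Good_def inputs_def by simp
    moreover have "\<forall>p\<in>P b ?ms. G n s p x y"
    proof
      fix p assume "p \<in> P b ?ms"
      then obtain j u v where p: "p = (j,u,v)" "j < b" "(u,v) \<in> Ctx (?ms!j)" unfolding P_def by auto
      have "?ms ! j = cls (W s j x y)" using p by simp
      moreover have "ord (cls (W s j x y)) (cls (W s j x y))" using ord_cls Wl le_refl by blast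
      ultimately have "\<forall>(u,v)\<in>Ctx (?ms!j). u @ W s j x y @ v \<in> L"
        using ctx_lemma[of "?ms!j" "W s j x y"] Wl cls_in_M by simp
      then show "G n s p x y" using p G by auto
    qed
    ultimately show "\<exists>ms\<in>Good b I. \<forall>p\<in>P b ms. G n s p x y" by blast
  next
    assume "\<exists>ms\<in>Good b I. \<forall>p\<in>P b ms. G n s p x y"
    then obtain ms where ms: "ms \<in> Good b I" "\<forall>p\<in>P b ms. G n s p x y" by blast
    have msM: "set ms \<subseteq> M" "length ms = b" "mprod mult e ms \<in> I" using ms unfolding Good_def inputs_def by auto
    have lej: "le (W s j x y) (r (ms!j))" if "j < b" for j
    proof -
      have mj: "ms!j \<in> M" using msM that by auto
      have "\<forall>(u,v)\<in>Ctx (ms!j). u @ W s j x y @ v \<in> L"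
      proof (clarify)
        fix u v assume "(u,v) \<in> Ctx (ms!j)"
        then have "(j,u,v) \<in> P b ms" using that unfolding P_def by auto
        then show "u @ W s j x y @ v \<in> L" using ms(2) G by blast
      qed
      then have "ord (cls (W s j x y)) (ms!j)" using ctx_lemma[OF mj Wl] by simp
      then show ?thesis using ord_cls[OF Wl r_props(1)[OF mj]] r_props(2)[OF mj] by simp
    qed
    have "list_all2 le (map (\<lambda>j. W s j x y) [0..<b]) (map (\<lambda>j. r (ms!j)) [0..<b])"
      using lej by (simp add: list_all2_conv_all_nth)
    moreover have "map (\<lambda>j. r (ms!j)) [0..<b] = map r ms" using msM(2)
      by (intro nth_equalityI) auto
    moreover have "set (map r ms) \<subseteq> lists \<Sigma>" using msM r_props by auto
    ultimately have "le (concat (map (\<lambda>j. W s j x y) [0..<b])) (concat (map r ms))"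
      using le_concat Wall by metis
    then have o: "ord (cls (concat (map (\<lambda>j. W s j x y) [0..<b]))) (mprod mult e ms)"
      using ord_cls[OF concat_lists[OF Wall] concat_lists[OF \<open>set (map r ms) \<subseteq> lists \<Sigma>\<close>]]
        mprod_r[OF msM(1)] by simp
    have cm: "cls (concat (map (\<lambda>j. W s j x y) [0..<b])) \<in> M" using cls_in_M concat_lists[OF Wall] .
    have "\<forall>y\<in>I. \<forall>x\<in>M. ord x y \<longrightarrow> x \<in> I" using I unfolding order_ideal_def by blast
    then have "cls (concat (map (\<lambda>j. W s j x y) [0..<b])) \<in> I" using o cm msM(3) by blast
    then show "mprod mult e (interleave x y) \<in> I" using mp by simp
  qed
qed

end


context synt_fin begin

lemma finXM: "finite (XM n)" by (rule finite_inputs[OF finM])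
lemma finXL: "finite (XL n)" by (rule finite_inputs) (simp add: finS)

lemma card_P: "card (P b ms) \<le> b * (card M * card M)"
proof -
  have "card (P b ms) = (\<Sum>j<b. card (Ctx (ms!j)))" unfolding P_def
    by (rule card_SigmaI) (auto simp: finite_Ctx)
  also have "\<dots> \<le> (\<Sum>j<b. card M * card M)" by (rule sum_mono) (rule card_Ctx)
  finally show ?thesis by simp
qed

lemma finite_P: "finite (P b ms)" unfolding P_def by (auto simp: finite_Ctx)

lemma G_bound:
  assumes p: "p \<in> P b ms" and ms: "ms \<in> Good b I" and ns: "2*K + 2*K*s \<le> n"
  shows "C1 (XM n) (XM n) (G n s p) \<le> C1 (XL n) (XL n) fL"
proof -
  obtain j u v where pp: "p = (j,u,v)" "(u,v) \<in> Ctx (ms!j)" using p unfolding P_def by auto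
  have uv: "u \<in> lists \<Sigma>" "v \<in> lists \<Sigma>" "length u \<le> K" "length v \<le> K" using Ctx_props[OF pp(2)] by auto
  have tot: "length u + 2*K*s + length v \<le> n" using uv ns by linarith
  have "C1 (XM n) (XM n) (G n s p) = C1 (XM n) (XM n) (\<lambda>x y. fL (aA n s j u v x) (aB n s j u v y))"
    unfolding G_def pp by simp
  also have "\<dots> \<le> C1 (XL n) (XL n) fL"
  proof (rule C1_restrict[OF finXL finXL])
    fix x assume "x \<in> XM n"
    then have "set x \<subseteq> M" unfolding inputs_def by auto
    then show "aA n s j u v x \<in> XL n" "aB n s j u v x \<in> XL n" using alpha_in uv tot by auto
  qed
  finally show ?thesis .
qed

lemma main_bound:
  assumes I: "order_ideal M ord I" and bs: "n \<le> b*s" and ns: "2*K + 2*K*s \<le> n"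
  shows "C1 (XM n) (XM n) (\<lambda>x y. mprod mult e (interleave x y) \<in> I)
     \<le> card (inputs b M) * (max 1 (C1 (XL n) (XL n) fL)) ^ (b * (card M * card M))"
proof -
  let ?l = "max 1 (C1 (XL n) (XL n) fL)" and ?B = "b * (card M * card M)"
  have finG: "finite (Good b I)"
    by (rule finite_subset[of _ "inputs b M"]) (auto simp: Good_def finite_inputs finM)
  have "C1 (XM n) (XM n) (\<lambda>x y. mprod mult e (interleave x y) \<in> I)
      = C1 (XM n) (XM n) (\<lambda>x y. \<exists>ms\<in>Good b I. \<forall>p\<in>P b ms. G n s p x y)"
    by (rule C1_cong) (rule key_equiv[OF I _ _ bs])
  also have "\<dots> \<le> (\<Sum>ms\<in>Good b I. C1 (XM n) (XM n) (\<lambda>x y. \<forall>p\<in>P b ms. G n s p x y))"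
    by (rule C1_Ex[OF finXM finXM finG])
  also have "\<dots> \<le> (\<Sum>ms\<in>Good b I. ?l ^ ?B)"
  proof (rule sum_mono)
    fix ms assume ms: "ms \<in> Good b I"
    have "C1 (XM n) (XM n) (\<lambda>x y. \<forall>p\<in>P b ms. G n s p x y) \<le> (\<Prod>p\<in>P b ms. C1 (XM n) (XM n) (G n s p))"
      by (rule C1_All[OF finXM finXM finite_P])
    also have "\<dots> \<le> (\<Prod>p\<in>P b ms. ?l)"
      by (rule prod_mono) (use G_bound[OF _ ms ns] in fastforce)
    also have "\<dots> = ?l ^ card (P b ms)" by simp
    also have "\<dots> \<le> ?l ^ ?B" by (rule power_increasing) (use card_P in auto)
    finally show "C1 (XM n) (XM n) (\<lambda>x y. \<forall>p\<in>P b ms. G n s p x y) \<le> ?l ^ ?B" .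
  qed
  also have "\<dots> = card (Good b I) * ?l ^ ?B" by simp
  also have "\<dots> \<le> card (inputs b M) * ?l ^ ?B"
    by (intro mult_right_mono card_mono) (auto simp: Good_def finite_inputs finM)
  finally show ?thesis .
qed

end


context synt_fin begin

definition ell where "ell n = C1 (XL n) (XL n) fL"
definition mu where "mu I n = C1 (XM n) (XM n) (\<lambda>x y. mprod mult e (interleave x y) \<in> I)"

lemma XL_set: "xs \<in> XL n \<Longrightarrow> set xs \<subseteq> insert None (Some ` \<Sigma>) \<and> length xs = n"
  unfolding inputs_def by auto

lemma XL_I: "set xs \<subseteq> insert None (Some ` \<Sigma>) \<Longrightarrow> length xs = n \<Longrightarrow> xs \<in> XL n"
  unfolding inputs_def by auto

lemma opt_word_lists: "z \<in> insert None (Some ` \<Sigma>) \<Longrightarrow> opt_word z \<in> lists \<Sigma>"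
  unfolding opt_word_def by auto

lemma ell_mono:
  assumes "m \<le> n" shows "ell m \<le> ell n"
proof -
  let ?a = "\<lambda>xs. xs @ replicate (n - m) (None :: 'a option)"
  have "ell m = C1 (XL m) (XL m) (\<lambda>x y. fL (?a x) (?a y))"
    unfolding ell_def
  proof (rule C1_cong)
    fix x y assume "x \<in> XL m" "y \<in> XL m"
    then have "length x = length y" using XL_set by auto
    then show "fL x y = fL (?a x) (?a y)" by (simp add: ow_append ow_None_None)
  qed
  also have "\<dots> \<le> ell n" unfolding ell_def
  proof (rule C1_restrict[OF finXL finXL])
    fix x assume "x \<in> XL m"
    then show "?a x \<in> XL n" using assms XL_set[of x m] by (intro XL_I) auto
  next
    fix x assume "x \<in> XL m"
    then show "?a x \<in> XL n" using assms XL_set[of x m] by (intro XL_I) auto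
  qed
  finally show ?thesis .
qed

lemma lower:
  "\<exists>I. order_ideal M ord I \<and> ell n \<le> mu I n"
proof -
  define IL where "IL = cls ` L"
  have memIL: "cls W \<in> IL \<longleftrightarrow> W \<in> L" if "W \<in> lists \<Sigma>" for W
  proof
    assume "cls W \<in> IL"
    then obtain w where "w \<in> L" "cls W = cls w" unfolding IL_def by auto
    then show "W \<in> L" using cls_eq_iff that Lsub L_sat by blast
  qed (auto simp: IL_def)
  have ideal: "order_ideal M ord IL" unfolding order_ideal_def
  proof (intro conjI ballI impI)
    show "IL \<subseteq> M" unfolding IL_def using Lsub cls_in_M by blast
  next
    fix y x assume "y \<in> IL" "x \<in> M" "ord x y"
    obtain w where w1: "w \<in> L" "y = cls w" using \<open>y \<in> IL\<close> unfolding IL_def by auto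
    obtain a where a1: "a \<in> lists \<Sigma>" "x = cls a" using \<open>x \<in> M\<close> by (rule M_cases)
    have w: "w \<in> L" "y = cls w" "a \<in> lists \<Sigma>" "x = cls a" using w1 a1 by auto
    then have "le a w" using ord_cls \<open>ord x y\<close> Lsub by auto
    then have "a \<in> L" using L_sat w by auto
    then show "x \<in> IL" using w unfolding IL_def by auto
  qed
  define \<phi> where "\<phi> z = cls (opt_word z)" for z :: "'a option"
  have "ell n = C1 (XL n) (XL n) (\<lambda>x y. (\<lambda>a b. mprod mult e (interleave a b) \<in> IL) (map \<phi> x) (map \<phi> y))"
    unfolding ell_def
  proof (rule C1_cong)
    fix x y assume xy: "x \<in> XL n" "y \<in> XL n"
    then have st: "set (interleave x y) \<subseteq> insert None (Some ` \<Sigma>)"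
      using set_interleave_sub[of x y] XL_set by blast
    then have st2: "set (map opt_word (interleave x y)) \<subseteq> lists \<Sigma>" using opt_word_lists by auto
    have "mprod mult e (interleave (map \<phi> x) (map \<phi> y)) = mprod mult e (map cls (map opt_word (interleave x y)))"
      unfolding map_interleave \<phi>_def by (simp add: comp_def)
    also have "\<dots> = cls (ow x y)" unfolding ow_def by (rule mprod_cls[OF st2])
    finally show "fL x y = (mprod mult e (interleave (map \<phi> x) (map \<phi> y)) \<in> IL)"
      using memIL concat_lists[OF st2] unfolding ow_def by simp
  qed
  also have "\<dots> \<le> mu IL n"
  proof -
    have mx: "map \<phi> x \<in> XM n" if "x \<in> XL n" for x
    proof -
      have "set x \<subseteq> insert None (Some ` \<Sigma>)" "length x = n" using XL_set that by auto
      then show "map \<phi> x \<in> XM n" unfolding inputs_def \<phi>_def using opt_word_lists cls_in_M by auto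
    qed
    show ?thesis unfolding mu_def
      using C1_restrict[OF finXM[of n] finXM[of n], where X = "XL n" and Y = "XL n" and \<alpha> = "map \<phi>" and \<beta> = "map \<phi>" and f = "\<lambda>a b. mprod mult e (interleave a b) \<in> IL"] mx
      by simp
  qed
  finally show ?thesis using ideal by blast
qed

end


context synt_fin begin

lemma cross:
  assumes "ell n \<le> 1" "x1 \<in> XL n" "y1 \<in> XL n" "fL x1 y1" "x2 \<in> XL n" "y2 \<in> XL n" "fL x2 y2"
  shows "fL x1 y2"
  using C1_le1_cross[OF finXL[of n] finXL[of n], where f = fL] assms unfolding ell_def by blast

lemma S_in: "w \<in> lists \<Sigma> \<Longrightarrow> set (map Some w) \<subseteq> insert None (Some ` \<Sigma>)"
  by (auto simp: in_lists_conv_set)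

lemma R_in: "set (replicate k None) \<subseteq> insert None (Some ` \<Sigma>)" by auto

lemma nil_in_L:
  assumes B: "\<forall>n. ell n \<le> 1" and w: "w \<in> L"
  shows "[] \<in> L"
proof -
  let ?n = "length w"
  have wl: "w \<in> lists \<Sigma>" using w Lsub by auto
  have i1: "map Some w \<in> XL ?n" using S_in[OF wl] by (intro XL_I) auto
  have i2: "replicate ?n None \<in> XL ?n" using R_in by (intro XL_I) auto
  have "fL (replicate ?n None) (map Some w)" using w by (simp add: ow_None_Some)
  moreover have "fL (map Some w) (replicate ?n None)" using w by (simp add: ow_Some_None)
  ultimately have "fL (replicate ?n None) (replicate ?n None)"
    using cross[OF B[rule_format] i2 i1 _ i1 i2] by blast
  then show ?thesis by (simp add: ow_None_None)
qed

lemma concat_closed: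
  assumes B: "\<forall>n. ell n \<le> 1" and nil: "[] \<in> L" and x: "x \<in> lists \<Sigma>" and y: "y \<in> lists \<Sigma>"
  shows "x @ y \<in> L \<longleftrightarrow> x \<in> L \<and> y \<in> L"
proof -
  let ?n = "length x + length y"
  let ?X1 = "map Some x @ replicate (length y) None"
  let ?Y2 = "replicate (length x) None @ map Some y"
  let ?R = "replicate ?n (None :: 'a option)"
  have R: "?R = replicate (length x) None @ replicate (length y) None" by (simp add: replicate_add)
  have iX1: "?X1 \<in> XL ?n" using S_in[OF x] R_in by (intro XL_I) auto
  have iY2: "?Y2 \<in> XL ?n" using S_in[OF y] R_in by (intro XL_I) auto
  have iR: "?R \<in> XL ?n" using R_in by (intro XL_I) auto
  have o1: "ow ?X1 ?R = x" unfolding R by (simp add: ow_append ow_Some_None ow_None_None)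
  have o2: "ow ?R ?Y2 = y" unfolding R by (simp add: ow_append ow_None_Some ow_None_None)
  have o3: "ow ?X1 ?Y2 = x @ y" by (simp add: ow_append ow_None_Some ow_Some_None)
  have o4: "ow ?R ?R = []" by (simp add: ow_None_None)
  show ?thesis
  proof
    assume "x @ y \<in> L"
    then have f: "fL ?X1 ?Y2" using o3 by simp
    have fr: "fL ?R ?R" using o4 nil by simp
    have "fL ?X1 ?R" by (rule cross[OF B[rule_format] iX1 iY2 f iR iR fr])
    moreover have "fL ?R ?Y2" by (rule cross[OF B[rule_format] iR iR fr iX1 iY2 f])
    ultimately show "x \<in> L \<and> y \<in> L" using o1 o2 by simp
  next
    assume "x \<in> L \<and> y \<in> L"
    then have "fL ?X1 ?R" "fL ?R ?Y2" using o1 o2 by auto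
    then have "fL ?X1 ?Y2" using cross[OF B[rule_format] iX1 iR _ iR iY2] by blast
    then show "x @ y \<in> L" using o3 by simp
  qed
qed

lemma concat_L:
  assumes B: "\<forall>n. ell n \<le> 1" and nil: "[] \<in> L"
  shows "set Ws \<subseteq> lists \<Sigma> \<Longrightarrow> concat Ws \<in> L \<longleftrightarrow> (\<forall>w\<in>set Ws. w \<in> L)"
proof (induction Ws)
  case Nil then show ?case using nil by simp
next
  case (Cons w Ws)
  then show ?case using concat_closed[OF B nil, of w "concat Ws"] concat_lists[of Ws \<Sigma>] by auto
qed

lemma degenerate:
  assumes B: "\<forall>n. ell n \<le> 1" and I: "order_ideal M ord I"
  shows "mu I n \<le> 1"
  unfolding mu_def
proof (rule cross_C1_le1)
  have Iid: "\<forall>y\<in>I. \<forall>x\<in>M. ord x y \<longrightarrow> x \<in> I" using I unfolding order_ideal_def by blast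
  define Wd where "Wd x y = concat (map r (interleave x y))" for x y
  have mp: "mprod mult e (interleave x y) = cls (Wd x y)" and Wl: "Wd x y \<in> lists \<Sigma>"
    if "x \<in> XM n" "y \<in> XM n" for x y
  proof -
    have "set (interleave x y) \<subseteq> M" using that set_interleave_sub[of x y] unfolding inputs_def by auto
    moreover have "set (map r (interleave x y)) \<subseteq> lists \<Sigma>"
      using \<open>set (interleave x y) \<subseteq> M\<close> r_props(1) by auto
    ultimately show "mprod mult e (interleave x y) = cls (Wd x y)" "Wd x y \<in> lists \<Sigma>"
      unfolding Wd_def using mprod_r concat_lists by (simp, blast)
  qed
  fix x1 y1 x2 y2
  assume x1: "x1 \<in> XM n" and y1: "y1 \<in> XM n" and f1: "mprod mult e (interleave x1 y1) \<in> I"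
    and x2: "x2 \<in> XM n" and y2: "y2 \<in> XM n" and f2: "mprod mult e (interleave x2 y2) \<in> I"
  show "mprod mult e (interleave x1 y2) \<in> I"
  proof (cases "L = {}")
    case True
    then have "\<And>a b. le a b" unfolding synt_le_def by auto
    then have "cls (Wd x1 y2) = cls (Wd x1 y1)" using cls_eq_iff Wl x1 y1 y2 by blast
    then show ?thesis using f1 mp x1 y1 y2 by simp
  next
    case False
    then have nil: "[] \<in> L" using nil_in_L[OF B] by blast
    have le_nil: "le [] w" if "w \<in> lists \<Sigma>" for w
      unfolding synt_le_def using concat_closed[OF B nil] that by auto
    have nonL: "cls w = cls w'" if "w \<in> lists \<Sigma>" "w' \<in> lists \<Sigma>" "w \<notin> L" "w' \<notin> L" for w w'
    proof -
      have "le w w'" "le w' w" unfolding synt_le_def using concat_closed[OF B nil] that by auto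
      then show ?thesis using cls_eq_iff that by blast
    qed
    have inL: "cls w = cls []" if "w \<in> lists \<Sigma>" "w \<in> L" for w
    proof -
      have "le w []" unfolding synt_le_def using concat_closed[OF B nil] that by auto
      then show ?thesis using cls_eq_iff le_nil that by blast
    qed
    have Wchar: "Wd x y \<in> L \<longleftrightarrow> (\<forall>m\<in>set x. r m \<in> L) \<and> (\<forall>m\<in>set y. r m \<in> L)"
      if "x \<in> XM n" "y \<in> XM n" for x y
    proof -
      have h: "length x = length y" "set x \<subseteq> M" "set y \<subseteq> M" using that unfolding inputs_def by auto
      have si: "set (interleave x y) = set x \<union> set y" by (rule set_interleave[OF h(1)])
      then have "set (interleave x y) \<subseteq> M" using h by auto
      then have "set (map r (interleave x y)) \<subseteq> lists \<Sigma>" using r_props(1) by (simp, blast)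
      then show ?thesis unfolding Wd_def using concat_L[OF B nil] si by auto
    qed
    show ?thesis
    proof (cases "Wd x1 y2 \<in> L")
      case True
      then have "cls (Wd x1 y2) = cls []" using inL Wl x1 y2 by blast
      moreover have "ord (cls []) (cls (Wd x1 y1))" using ord_cls le_nil Wl x1 y1 by auto
      moreover have "cls [] \<in> M" using cls_in_M by auto
      ultimately show ?thesis using Iid f1 mp x1 y1 y2 by auto
    next
      case False
      then have "Wd x1 y1 \<notin> L \<or> Wd x2 y2 \<notin> L" using Wchar x1 y1 x2 y2 by auto
      then show ?thesis
      proof
        assume "Wd x1 y1 \<notin> L"
        then have "cls (Wd x1 y2) = cls (Wd x1 y1)" using nonL False Wl x1 y1 y2 by blast
        then show ?thesis using f1 mp x1 y1 y2 by simp
      next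
        assume "Wd x2 y2 \<notin> L"
        then have "cls (Wd x1 y2) = cls (Wd x2 y2)" using nonL False Wl x1 x2 y2 by blast
        then show ?thesis using f2 mp x1 x2 y2 by simp
      qed
    qed
  qed
qed

end


context synt_fin begin

lemma N1_nonneg: "N1 X Y f \<ge> 0" unfolding N1_eq by simp

lemma ell_N1: "N1_lang \<Sigma> L n = log 2 (max 1 (real (ell n)))"
  unfolding N1_lang_def ell_def ow_def N1_eq by simp

definition Ideals where "Ideals = {I. order_ideal M ord I}"

lemma fin_Ideals: "finite Ideals"
  by (rule finite_subset[of _ "Pow M"]) (auto simp: Ideals_def order_ideal_def finM)

lemma empty_Ideal: "{} \<in> Ideals" unfolding Ideals_def order_ideal_def by auto

lemma mon_eq: "N1_monoid M mult e ord n = Max ((\<lambda>I. N1 (XM n) (XM n) (\<lambda>x y. mprod mult e (interleave x y) \<in> I)) ` Ideals)"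
  unfolding N1_monoid_def N1_monoid_ideal_def Ideals_def by simp

lemma mon_ge: "I \<in> Ideals \<Longrightarrow> N1 (XM n) (XM n) (\<lambda>x y. mprod mult e (interleave x y) \<in> I) \<le> N1_monoid M mult e ord n"
  unfolding mon_eq by (rule Max_ge) (use fin_Ideals in auto)

lemma mon_le:
  assumes "\<And>I. I \<in> Ideals \<Longrightarrow> N1 (XM n) (XM n) (\<lambda>x y. mprod mult e (interleave x y) \<in> I) \<le> c"
  shows "N1_monoid M mult e ord n \<le> c"
  unfolding mon_eq using assms fin_Ideals empty_Ideal by (subst Max_le_iff) auto

lemma lower_N1: "N1_lang \<Sigma> L n \<le> N1_monoid M mult e ord n"
proof -
  obtain I where I: "order_ideal M ord I" "ell n \<le> mu I n" using lower by blast
  have "N1_lang \<Sigma> L n = N1 (XL n) (XL n) fL" unfolding N1_lang_def ow_def by simp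
  also have "\<dots> \<le> N1 (XM n) (XM n) (\<lambda>x y. mprod mult e (interleave x y) \<in> I)"
    by (rule N1_mono) (use I in \<open>simp add: ell_def mu_def\<close>)
  also have "\<dots> \<le> N1_monoid M mult e ord n" by (rule mon_ge) (use I in \<open>simp add: Ideals_def\<close>)
  finally show ?thesis .
qed

lemma mon_nonneg: "N1_monoid M mult e ord n \<ge> 0"
  using mon_ge[OF empty_Ideal, of n] N1_nonneg[of "XM n" "XM n" "\<lambda>x y. mprod mult e (interleave x y) \<in> {}"] by linarith

definition bb where "bb = 8*K"
definition BB where "BB = bb * (card M * card M)"
definition AA where "AA = card (inputs bb M)"

lemma AA_pos: "AA \<ge> 1"
proof -
  have "replicate bb (cls []) \<in> inputs bb M" unfolding inputs_def using cls_in_M[of "[]"] by auto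
  then have "card (inputs bb M) \<noteq> 0" using finite_inputs[OF finM] by auto
  then show ?thesis unfolding AA_def by simp
qed

lemma arith:
  assumes "8*K \<le> n"
  shows "n \<le> bb * (n div (4*K))" "2*K + 2*K*(n div (4*K)) \<le> n"
proof -
  let ?d = "4*K" and ?s = "n div (4*K)"
  have Kp: "K \<ge> 1" by (rule K_pos)
  have a: "?s * ?d \<le> n" by simp
  have b: "n < ?s * ?d + ?d"
  proof -
    have "n = ?s * ?d + n mod ?d" by (rule div_mult_mod_eq[symmetric])
    moreover have "n mod ?d < ?d" using Kp by simp
    ultimately show ?thesis by linarith
  qed
  have s1: "?s \<ge> 1" using assms Kp by (simp add: div_greater_zero_iff Suc_le_eq)
  have "K * 1 \<le> K * ?s" using s1 by (rule mult_le_mono2)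
  then have c: "K \<le> K * ?s" by simp
  have a': "4 * (K * ?s) \<le> n" using a by (simp add: algebra_simps)
  have b': "n < 4 * (K * ?s) + 4 * K" using b by (simp add: algebra_simps)
  have "n \<le> 8 * (K * ?s)" using b' c by linarith
  then show "n \<le> bb * ?s" unfolding bb_def by (simp add: algebra_simps)
  have "2*K + 2*(K*?s) \<le> n" using a' assms by linarith
  then show "2*K + 2*K*?s \<le> n" by (simp add: algebra_simps)
qed

lemma upper_N1:
  assumes "8*K \<le> n"
  shows "N1_monoid M mult e ord n \<le> log 2 (real AA) + real BB * N1_lang \<Sigma> L n"
proof (rule mon_le)
  fix I assume "I \<in> Ideals"
  then have I: "order_ideal M ord I" unfolding Ideals_def by simp
  let ?s = "n div (4*K)"
  let ?l = "max 1 (ell n)"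
  have "mu I n \<le> AA * ?l ^ BB"
    unfolding mu_def AA_def BB_def ell_def by (rule main_bound[OF I arith[OF assms]])
  then have r: "real (mu I n) \<le> real AA * real ?l ^ BB" by (metis of_nat_le_iff of_nat_mult of_nat_power)
  have lp: "real ?l \<ge> 1" by simp
  have "N1 (XM n) (XM n) (\<lambda>x y. mprod mult e (interleave x y) \<in> I) \<le> log 2 (real AA * real ?l ^ BB)"
  proof (rule N1_le[OF finXM finXM])
    show "real (C1 (XM n) (XM n) (\<lambda>x y. mprod mult e (interleave x y) \<in> I)) \<le> real AA * real ?l ^ BB"
      using r unfolding mu_def .
    have p: "real ?l ^ BB \<ge> 1" by (rule one_le_power) simp
    have a: "real AA \<ge> 1" using AA_pos by simp
    show "1 \<le> real AA * real ?l ^ BB" using mult_mono[OF a p] by simp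
  qed
  also have "\<dots> = log 2 (real AA) + real BB * log 2 (real ?l)"
    using AA_pos lp by (simp add: log_mult log_nat_power)
  also have "log 2 (real ?l) = N1_lang \<Sigma> L n" unfolding ell_N1 by (simp add: of_nat_max)
  finally show "N1 (XM n) (XM n) (\<lambda>x y. mprod mult e (interleave x y) \<in> I) \<le> log 2 (real AA) + real BB * N1_lang \<Sigma> L n" .
qed

lemma final:
  "(\<lambda>n. N1_monoid M mult e ord n) \<in> \<Theta>(\<lambda>n. N1_lang \<Sigma> L n)"
proof (cases "\<exists>n0. ell n0 \<ge> 2")
  case True
  then obtain n0 where n0: "ell n0 \<ge> 2" by blast
  let ?c = "log 2 (real AA) + real BB"
  have ev: "eventually (\<lambda>n. n \<ge> max n0 (8*K)) at_top" by (rule eventually_ge_at_top)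
  have "eventually (\<lambda>n. norm (N1_monoid M mult e ord n) \<le> ?c * norm (N1_lang \<Sigma> L n)) at_top"
    using ev
  proof eventually_elim
    case (elim n)
    have "ell n \<ge> 2" using ell_mono[of n0 n] n0 elim by simp
    then have g1: "N1_lang \<Sigma> L n \<ge> 1" unfolding ell_N1 by simp
    have c0: "log 2 (real AA) \<ge> 0" using AA_pos by simp
    have "N1_monoid M mult e ord n \<le> log 2 (real AA) + real BB * N1_lang \<Sigma> L n"
      using upper_N1 elim by simp
    also have "\<dots> \<le> log 2 (real AA) * N1_lang \<Sigma> L n + real BB * N1_lang \<Sigma> L n"
      using c0 g1 by (simp add: mult_le_cancel_left1)
    also have "\<dots> = ?c * N1_lang \<Sigma> L n" by (simp add: algebra_simps)
    finally show ?case using mon_nonneg g1 by simp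
  qed
  then have O: "(\<lambda>n. N1_monoid M mult e ord n) \<in> O(\<lambda>n. N1_lang \<Sigma> L n)" by (rule bigoI)
  have "eventually (\<lambda>n. norm (N1_lang \<Sigma> L n) \<le> 1 * norm (N1_monoid M mult e ord n)) at_top"
    using lower_N1 mon_nonneg N1_nonneg unfolding ell_N1
    by (intro always_eventually allI) (simp add: N1_lang_def ow_def N1_eq)
  then have "(\<lambda>n. N1_lang \<Sigma> L n) \<in> O(\<lambda>n. N1_monoid M mult e ord n)" by (rule bigoI)
  then show ?thesis using O by (auto simp: bigomega_iff_bigo)
next
  case False
  have B: "\<forall>n. ell n \<le> 1"
  proof
    fix n have "\<not> ell n \<ge> 2" using False by blast
    then show "ell n \<le> 1" by linarith
  qed
  have "N1_monoid M mult e ord n = N1_lang \<Sigma> L n" for n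
  proof -
    have "real (ell n) \<le> 1" using B by simp
    then have "max 1 (real (ell n)) = 1" by simp
    then have g: "N1_lang \<Sigma> L n = 0" unfolding ell_N1 by simp
    have "N1_monoid M mult e ord n \<le> 0"
    proof (rule mon_le)
      fix I assume "I \<in> Ideals"
      then have "mu I n \<le> 1" using degenerate[OF B] unfolding Ideals_def by blast
      then show "N1 (XM n) (XM n) (\<lambda>x y. mprod mult e (interleave x y) \<in> I) \<le> 0"
        unfolding N1_eq mu_def by (simp add: max_def)
    qed
    then show ?thesis using g mon_nonneg[of n] by simp
  qed
  then have "(\<lambda>n. N1_monoid M mult e ord n) = (\<lambda>n. N1_lang \<Sigma> L n)" by blast
  then show ?thesis by simp
qed

end

theorem theorem4p1:
  fixes \<Sigma> :: "'a set" and L :: "'a list set"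
  assumes "finite \<Sigma>" and "L \<subseteq> lists \<Sigma>" and "regular \<Sigma> L"
  shows "(\<lambda>n. N1_monoid (synt_monoid \<Sigma> L) (synt_mult \<Sigma> L) (synt_unit \<Sigma> L) (synt_order \<Sigma> L) n)
           \<in> \<Theta>(\<lambda>n. N1_lang \<Sigma> L n)"
proof -
  interpret synt \<Sigma> L by unfold_locales (rule assms(2))
  have "finite (synt_monoid \<Sigma> L)" by (rule finite_M[OF assms(3)])
  then interpret synt_fin \<Sigma> L by unfold_locales (use assms in auto)
  show ?thesis by (rule final)
qed


end
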